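(* Let $(f_0, M_0, \Lambda_0, \mathcal{Q}_0)$ be a SIMDG with induced set $\mathcal{P}_0$ and training distribution $P_{\mathrm{tr}}$ as in the context, and suppose $\{N(0,k^2 I_r): k\in\mathbb{N}\}\subseteq\mathcal{Q}_0$. Suppose that $\Lambda_0$ satisfies one of: (a) for $(U,V)\sim\Lambda_0$, $V$ has a density with respect to Lebesgue measure, and $\gamma_0(V)=\mathrm{E}_{P_{\mathrm{tr}}}[U\mid V]$ is almost surely bounded; (b) $\Lambda_0$ is a centered multivariate Gaussian distribution with non-degenerate covariance matrix. Then $$\inf_{P\in\mathcal{P}_0}\mathrm{E}_P\Big[\big(\mathrm{E}_P[\gamma_0(V)\mid R^\top X]-\mathrm{E}_P[\gamma_0(V)\mid X]\big)^2\Big]=0.$$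
   Context: Fix integers $p,r\ge 1$. A SIMDG is a tuple $(f_0, M_0, \Lambda_0, \mathcal{Q}_0)$ where $f_0:\mathbb{R}^p\to\mathbb{R}$ is measurable, $M_0\in\mathbb{R}^{p\times r}$, $\Lambda_0$ is a distribution on $\mathbb{R}^{1+p}$ such that $(U,V)\sim\Lambda_0$ satisfies $\mathrm{E}[(U,V)]=0$ and $\mathrm{E}[\|(U,V)\|_2^2]<\infty$, and $\mathcal{Q}_0$ is a set of distributions on $\mathbb{R}^r$. For each $Q\in\mathcal{Q}_0$ the model induces a distribution $P$ of $(U,V,X,Y,Z)$ by drawing $((U,V),Z)\sim\Lambda_0\otimes Q$ and setting $X = M_0 Z + V$, $Y = f_0(X)+U$; $\mathcal{P}_0$ is the set of all such induced distributions. Standing setting: $\sup_{P\in\mathcal{P}_0}\mathrm{E}_P[f_0(X)]^2<\infty$; $Q_{\mathrm{tr}}\in\mathcal{Q}_0$ satisfies $\mathrm{E}_{Q_{\mathrm{tr}}}[Z]=0$ and $\mathrm{E}_{Q_{\mathrm{tr}}}[ZZ^\top]\succ 0$; $P_{\mathrm{tr}}$ is the distribution induced by $Q_{\mathrm{tr}}$. Let $q=\mathrm{rank}(M_0)$; if $q<p$, $R\in\mathbb{R}^{p\times(p-q)}$ has columns forming an orthonormal basis of $\ker(M_0^\top)$, and if $q=p$, $R$ is the zero vector in $\mathbb{R}^{p\times 1}$. $\gamma_0(v):=\mathrm{E}_{P_{\mathrm{tr}}}[U\mid V=v]$ (a fixed function). *)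

theory Defs
  imports "HOL-Analysis.Analysis" "HOL-Probability.Probability"
begin

type_synonym ('p, 'r) outcome = "real \<times> (real^'p) \<times> (real^'p) \<times> real \<times> (real^'r)"

text \<open>Coordinates of an outcome (U, V, X, Y, Z).\<close>
definition obsU :: "('p::finite, 'r::finite) outcome \<Rightarrow> real" where
  "obsU w = fst w"
definition obsV :: "('p::finite, 'r::finite) outcome \<Rightarrow> real^'p" where
  "obsV w = fst (snd w)"
definition obsX :: "('p::finite, 'r::finite) outcome \<Rightarrow> real^'p" where
  "obsX w = fst (snd (snd w))"

definition simdg :: "(real^'p \<Rightarrow> real) \<Rightarrow> real^'r^'p \<Rightarrow> (real \<times> (real^'p)) measure
    \<Rightarrow> (real^'r) measure set \<Rightarrow> bool" where
  "simdg f0 M0 \<Lambda> Qs \<longleftrightarrow>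
     f0 \<in> borel_measurable borel \<and>
     prob_space \<Lambda> \<and> sets \<Lambda> = sets borel \<and>
     integrable \<Lambda> (\<lambda>w. (norm w)\<^sup>2) \<and>
     integrable \<Lambda> fst \<and> integrable \<Lambda> snd \<and>
     (\<integral>w. fst w \<partial>\<Lambda>) = 0 \<and> (\<integral>w. snd w \<partial>\<Lambda>) = 0 \<and>
     (\<forall>Q\<in>Qs. prob_space Q \<and> sets Q = sets borel)"

definition induced_dist :: "(real^'p \<Rightarrow> real) \<Rightarrow> real^'r^'p \<Rightarrow> (real \<times> (real^'p)) measure
    \<Rightarrow> (real^'r) measure \<Rightarrow> ('p::finite, 'r::finite) outcome measure" where
  "induced_dist f0 M0 \<Lambda> Q =
     distr (\<Lambda> \<Otimes>\<^sub>M Q) borel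
       (\<lambda>((u, v), z). (u, v, M0 *v z + v, f0 (M0 *v z + v) + u, z))"

definition induced_set :: "(real^'p \<Rightarrow> real) \<Rightarrow> real^'r^'p \<Rightarrow> (real \<times> (real^'p)) measure
    \<Rightarrow> (real^'r) measure set \<Rightarrow> ('p::finite, 'r::finite) outcome measure set" where
  "induced_set f0 M0 \<Lambda> Qs = induced_dist f0 M0 \<Lambda> ` Qs"

definition gauss_iso :: "real \<Rightarrow> (real^'r::finite) measure" where
  "gauss_iso k = density lborel (\<lambda>z. ennreal (\<Prod>i\<in>UNIV. normal_density 0 k (z $ i)))"

definition centered_nondeg_gaussian :: "(real \<times> (real^'p::finite)) measure \<Rightarrow> bool" where
  "centered_nondeg_gaussian \<Lambda> \<longleftrightarrow>
     (\<forall>(a::real) (b::real^'p). (a, b) \<noteq> 0 \<longrightarrow>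
        (\<exists>\<sigma>>0. distr \<Lambda> borel (\<lambda>(u, v). a * u + b \<bullet> v)
                 = density lborel (\<lambda>x. ennreal (normal_density 0 \<sigma> x))))"

text \<open>R represented by the list of its columns.  If q = rank M0 < p: p - q orthonormal
  columns spanning ker(M0^T); if q = p: the single zero column.\<close>
definition is_R :: "real^'r^'p \<Rightarrow> (real^'p::finite) list \<Rightarrow> bool" where
  "is_R M0 Rs \<longleftrightarrow>
     (rank M0 < CARD('p) \<longrightarrow>
        length Rs = CARD('p) - rank M0 \<and>
        (\<forall>i<length Rs. \<forall>j<length Rs. Rs ! i \<bullet> Rs ! j = (if i = j then 1 else 0)) \<and>
        span (set Rs) = {x. transpose M0 *v x = 0}) \<and>
     (rank M0 = CARD('p) \<longrightarrow> Rs = [0])"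

definition Rt_map :: "(real^'p::finite) list \<Rightarrow> real^'p \<Rightarrow> nat \<Rightarrow> real" where
  "Rt_map Rs x = (\<lambda>i\<in>{..<length Rs}. Rs ! i \<bullet> x)"

definition crit :: "(real^'p::finite) list \<Rightarrow> (real^'p \<Rightarrow> real)
    \<Rightarrow> ('p, 'r::finite) outcome measure \<Rightarrow> real" where
  "crit Rs g P =
     (\<integral>w. (real_cond_exp P
                 (vimage_algebra (space P) (\<lambda>w. Rt_map Rs (obsX w))
                    (PiM {..<length Rs} (\<lambda>_. borel))) (\<lambda>w. g (obsV w)) w
            - real_cond_exp P (vimage_algebra (space P) obsX borel) (\<lambda>w. g (obsV w)) w)\<^sup>2 \<partial>P)"

end

theory Submission
  imports Defs
begin



lemma vimage_fiber:
  fixes f :: "'a \<Rightarrow> real"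
  assumes f: "f \<in> borel_measurable (vimage_algebra UNIV F M)" and F: "F \<in> UNIV \<rightarrow> space M"
    and eq: "F w = F w'"
  shows "f w = f w'"
proof -
  have "f -` {f w} \<inter> space (vimage_algebra UNIV F M) \<in> sets (vimage_algebra UNIV F M)"
    by (rule measurable_sets[OF f]) simp
  then have "f -` {f w} \<in> {F -` A \<inter> UNIV | A. A \<in> sets M}"
    using sets_vimage_algebra2[OF F] by simp
  then obtain A where A: "f -` {f w} = F -` A" by auto
  have "w \<in> f -` {f w}" by simp
  then have "F w' \<in> A" using A eq by auto
  then have "w' \<in> f -` {f w}" using A by auto
  then show ?thesis by simp
qed



lemma cond_exp_L2:
  assumes P: "prob_space M" and S: "sigma_finite_subalgebra M F"
    and fm[measurable]: "f \<in> borel_measurable M" and f2: "integrable M (\<lambda>x. (f x)\<^sup>2)"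
  shows "integrable M (\<lambda>x. (real_cond_exp M F f x)\<^sup>2)"
    "(\<integral>x. (real_cond_exp M F f x)\<^sup>2 \<partial>M) \<le> (\<integral>x. (f x)\<^sup>2 \<partial>M)"
proof -
  interpret prob_space M by fact
  interpret sigma_finite_subalgebra M F by fact
  have fi: "integrable M f" using square_integrable_imp_integrable[OF fm f2] .
  have J: "AE x in M. (real_cond_exp M F f x)\<^sup>2 \<le> real_cond_exp M F (\<lambda>x. (f x)\<^sup>2) x"
    by (rule real_cond_exp_jensens_inequality(2)[of f UNIV, OF fi])
      (auto simp: f2 convex_power_even)
  have I2: "integrable M (real_cond_exp M F (\<lambda>x. (f x)\<^sup>2))" by (rule real_cond_exp_int(1)[OF f2])
  show I: "integrable M (\<lambda>x. (real_cond_exp M F f x)\<^sup>2)"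
    by (rule Bochner_Integration.integrable_bound[OF I2]) (use J in auto)
  have "(\<integral>x. (real_cond_exp M F f x)\<^sup>2 \<partial>M) \<le> (\<integral>x. real_cond_exp M F (\<lambda>x. (f x)\<^sup>2) x \<partial>M)"
    by (rule integral_mono_AE[OF I I2 J])
  also have "\<dots> = (\<integral>x. (f x)\<^sup>2 \<partial>M)" by (rule real_cond_exp_int(2)[OF f2])
  finally show "(\<integral>x. (real_cond_exp M F f x)\<^sup>2 \<partial>M) \<le> (\<integral>x. (f x)\<^sup>2 \<partial>M)" .
qed



lemma nd_coord:
  fixes k x b :: real assumes k: "k > 0"
  shows "(normal_density 0 k (x - b))\<^sup>2 / normal_density 0 k x
         = exp (b\<^sup>2 / k\<^sup>2) * normal_density 0 k (x - 2 * b)"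
proof -
  define c where "c = 1 / sqrt (2 * pi * k\<^sup>2)"
  have c: "c > 0" using k unfolding c_def by simp
  have "(normal_density 0 k (x - b))\<^sup>2 / normal_density 0 k x
      = c * (exp (-(x - b)\<^sup>2/ (2 * k\<^sup>2)))\<^sup>2 / exp (-(x)\<^sup>2/ (2 * k\<^sup>2))"
    unfolding normal_density_def c_def[symmetric] using c by (simp add: power2_eq_square)
  also have "\<dots> = c * exp (2 * (-(x - b)\<^sup>2/ (2 * k\<^sup>2)) - (-(x)\<^sup>2/ (2 * k\<^sup>2)))"
    by (metis exp_diff exp_double times_divide_eq_right)
  also have "2 * (-(x - b)\<^sup>2/ (2 * k\<^sup>2)) - (-(x)\<^sup>2/ (2 * k\<^sup>2)) = b\<^sup>2 / k\<^sup>2 + (-(x - 2*b)\<^sup>2/ (2 * k\<^sup>2))"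
    using k by (simp add: field_simps power2_eq_square)
  also have "c * exp (b\<^sup>2 / k\<^sup>2 + (-(x - 2*b)\<^sup>2/ (2 * k\<^sup>2))) = exp (b\<^sup>2 / k\<^sup>2) * normal_density 0 k (x - 2 * b)"
    unfolding normal_density_def c_def[symmetric] by (simp add: exp_add[symmetric])
  finally show ?thesis .
qed

definition nd :: "real \<Rightarrow> real^'r::finite \<Rightarrow> real" where
  "nd k z = (\<Prod>i\<in>UNIV. normal_density 0 k (z $ i))"

lemma nd_pos: "k > 0 \<Longrightarrow> nd k z > 0"
  unfolding nd_def by (intro prod_pos) (simp add: normal_density_pos)

lemma nd_meas[measurable]: "nd k \<in> borel_measurable borel"
  unfolding nd_def by measurable

lemma nd_sq:
  assumes k: "k > 0"
  shows "(nd k (z - a))\<^sup>2 / nd k z = exp ((\<Sum>i\<in>UNIV. (a $ i)\<^sup>2) / k\<^sup>2) * nd k (z - 2 *\<^sub>R a)"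
proof -
  have "(nd k (z - a))\<^sup>2 / nd k z = (\<Prod>i\<in>UNIV. (normal_density 0 k (z $ i - a $ i))\<^sup>2 / normal_density 0 k (z $ i))"
    unfolding nd_def by (simp add: prod_dividef power_mult_distrib prod_power_distrib)
  also have "\<dots> = (\<Prod>i\<in>UNIV. exp ((a $ i)\<^sup>2 / k\<^sup>2) * normal_density 0 k (z $ i - 2 * a $ i))"
    using nd_coord[OF k] by simp
  also have "\<dots> = exp ((\<Sum>i\<in>UNIV. (a $ i)\<^sup>2) / k\<^sup>2) * nd k (z - 2 *\<^sub>R a)"
    unfolding nd_def by (simp add: prod.distrib exp_sum sum_divide_distrib)
  finally show ?thesis .
qed


lemma lborel_shift_integral:
  fixes F :: "'a::euclidean_space \<Rightarrow> real"
  assumes [measurable]: "F \<in> borel_measurable borel"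
  shows "(\<integral>x. F (c + x) \<partial>lborel) = (\<integral>x. F x \<partial>lborel)"
proof -
  have "(\<integral>x. F x \<partial>lborel) = (\<integral>x. F x \<partial>distr lborel borel ((+) c))"
    by (simp add: lborel_distr_plus)
  also have "\<dots> = (\<integral>x. F (c + x) \<partial>lborel)" by (rule integral_distr) auto
  finally show ?thesis by simp
qed

lemma lborel_shift_integrable:
  fixes F :: "'a::euclidean_space \<Rightarrow> real"
  assumes [measurable]: "F \<in> borel_measurable borel" and "integrable lborel F"
  shows "integrable lborel (\<lambda>x. F (c + x))"
proof -
  have "integrable (distr lborel borel ((+) c)) F"
    by (simp add: lborel_distr_plus assms)
  then show ?thesis by (subst (asm) integrable_distr_eq) auto
qed

lemma prob_abs_sq:
  assumes P: "prob_space M" and [measurable]: "X \<in> borel_measurable M"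
    and I: "integrable M (\<lambda>x. (X x)\<^sup>2)"
  shows "(\<integral>x. \<bar>X x\<bar> \<partial>M) \<le> sqrt (\<integral>x. (X x)\<^sup>2 \<partial>M)"
proof -
  interpret prob_space M by fact
  have Xi: "integrable M X" using square_integrable_imp_integrable[OF _ I] by simp
  define m where "m = (\<integral>x. \<bar>X x\<bar> \<partial>M)"
  have "0 \<le> (\<integral>x. (\<bar>X x\<bar> - m)\<^sup>2 \<partial>M)" by simp
  also have "(\<integral>x. (\<bar>X x\<bar> - m)\<^sup>2 \<partial>M) = (\<integral>x. (X x)\<^sup>2 - 2 * m * \<bar>X x\<bar> + m\<^sup>2 \<partial>M)"
    by (intro Bochner_Integration.integral_cong) (auto simp: power2_eq_square algebra_simps)
  also have "\<dots> = (\<integral>x. (X x)\<^sup>2 \<partial>M) - 2 * m * m + m\<^sup>2"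
    using I Xi by (simp add: m_def prob_space)
  finally have "m\<^sup>2 \<le> (\<integral>x. (X x)\<^sup>2 \<partial>M)" by (simp add: power2_eq_square)
  then show ?thesis unfolding m_def by (simp add: real_le_rsqrt)
qed


lemma gauss_iso_nd: "gauss_iso k = density lborel (\<lambda>z. ennreal (nd k z))"
  unfolding gauss_iso_def nd_def ..

lemma gauss_shift:
  fixes \<phi> :: "real^'r::finite \<Rightarrow> real"
  assumes k: "k > 0" and P: "prob_space (gauss_iso k :: (real^'r) measure)"
    and \<phi>[measurable]: "\<phi> \<in> borel_measurable borel" and B: "\<And>z. \<bar>\<phi> z\<bar> \<le> B"
  shows "\<bar>(\<integral>z. \<phi> (z + a) \<partial>gauss_iso k) - (\<integral>z. \<phi> z \<partial>gauss_iso k)\<bar>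
          \<le> B * sqrt (exp ((\<Sum>i\<in>UNIV. (a $ i)\<^sup>2) / k\<^sup>2) - 1)"
proof -
  define N where "N = (gauss_iso k :: (real^'r) measure)"
  define s where "s = (\<Sum>i\<in>UNIV. (a $ i)\<^sup>2) / k\<^sup>2"
  interpret N: prob_space N using P N_def by simp
  have N: "N = density lborel (\<lambda>z. ennreal (nd k z))" unfolding N_def gauss_iso_nd ..
  have sN[simp]: "sets N = sets borel" unfolding N by simp
  have ndpos: "\<And>z. nd k z > 0" using nd_pos[OF k] .
  have B0: "0 \<le> B" using B[of 0] by linarith
  have "integrable N (\<lambda>_. 1::real)" by simp
  then have ndi: "integrable lborel (nd k :: real^'r \<Rightarrow> real)"
    unfolding N by (subst (asm) integrable_density) (auto intro: less_imp_le[OF ndpos])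
  have "(\<integral>z. 1 \<partial>N) = (1::real)" by (simp add: N.prob_space)
  then have nd1: "(\<integral>z. nd k (z::real^'r) \<partial>lborel) = (1::real)"
    unfolding N by (subst (asm) integral_density) (auto intro: less_imp_le[OF ndpos])
  have ndsi: "integrable lborel (\<lambda>z. nd k (z - c))" for c :: "real^'r"
    using lborel_shift_integrable[OF nd_meas ndi, of "-c"] by simp
  have nds1: "(\<integral>z. nd k (z - c) \<partial>lborel) = 1" for c :: "real^'r"
    using lborel_shift_integral[of "\<lambda>z. nd k (z - c)" c] nd1 by simp
  define L where "L z = nd k (z - a) / nd k z" for z
  have Lm[measurable]: "L \<in> borel_measurable borel" unfolding L_def by measurable
  have Lnn: "L z \<ge> 0" for z unfolding L_def using ndpos[of z] ndpos[of "z - a"] by simp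
  have ndL: "nd k z * L z = nd k (z - a)" for z unfolding L_def using ndpos[of z] by simp
  have ndL2: "nd k z * (L z)\<^sup>2 = exp s * nd k (z - 2 *\<^sub>R a)" for z
    unfolding L_def s_def using ndpos[of z] nd_sq[OF k, of z a]
    by (simp add: power2_eq_square field_simps)
  have intN: "integrable N f \<longleftrightarrow> integrable lborel (\<lambda>z. nd k z * f z)"
    if [measurable]: "f \<in> borel_measurable borel" for f :: "real^'r \<Rightarrow> real"
    unfolding N by (subst integrable_density) (auto intro: less_imp_le[OF ndpos])
  have integN: "(\<integral>z. f z \<partial>N) = (\<integral>z. nd k z * f z \<partial>lborel)"
    if [measurable]: "f \<in> borel_measurable borel" for f :: "real^'r \<Rightarrow> real"
    unfolding N by (subst integral_density) (auto intro: less_imp_le[OF ndpos])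
  have LiN: "integrable N L" using ndsi[of a] by (simp add: intN ndL)
  have L1: "(\<integral>z. L z \<partial>N) = 1" using nds1[of a] by (simp add: integN ndL)
  have L2iN: "integrable N (\<lambda>z. (L z)\<^sup>2)" using ndsi[of "2 *\<^sub>R a"] by (simp add: intN ndL2)
  have L2: "(\<integral>z. (L z)\<^sup>2 \<partial>N) = exp s" using nds1[of "2 *\<^sub>R a"] by (simp add: integN ndL2)
  have \<phi>N[measurable]: "\<phi> \<in> borel_measurable N" by (subst measurable_cong_sets[OF sN refl]) simp
  have LN[measurable]: "L \<in> borel_measurable N" by (subst measurable_cong_sets[OF sN refl]) simp
  have \<phi>iN: "integrable N \<phi>"
    by (rule N.integrable_const_bound[where B=B]) (auto simp: B)
  have L\<phi>iN: "integrable N (\<lambda>z. L z * \<phi> z)"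
    by (rule Bochner_Integration.integrable_bound[OF integrable_mult_right[OF LiN, of B]])
       (auto simp: abs_mult Lnn B0 mult.commute[of _ "L _"] intro!: mult_left_mono[OF B])
  have "(\<integral>z. \<phi> (z + a) \<partial>N) = (\<integral>z. nd k z * \<phi> (z + a) \<partial>lborel)" by (simp add: integN)
  also have "\<dots> = (\<integral>z. nd k (a + z - a) * \<phi> (a + z) \<partial>lborel)" by (simp add: add.commute)
  also have "\<dots> = (\<integral>z. nd k (z - a) * \<phi> z \<partial>lborel)"
    by (rule lborel_shift_integral[of "\<lambda>z. nd k (z - a) * \<phi> z"]) simp
  also have "\<dots> = (\<integral>z. L z * \<phi> z \<partial>N)" by (simp add: integN ndL mult.assoc[symmetric])
  finally have sh: "(\<integral>z. \<phi> (z + a) \<partial>N) = (\<integral>z. L z * \<phi> z \<partial>N)" .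
  have "\<bar>(\<integral>z. \<phi> (z + a) \<partial>N) - (\<integral>z. \<phi> z \<partial>N)\<bar> = \<bar>\<integral>z. (L z - 1) * \<phi> z \<partial>N\<bar>"
    using L\<phi>iN \<phi>iN by (simp add: sh left_diff_distrib)
  also have "\<dots> \<le> (\<integral>z. \<bar>(L z - 1) * \<phi> z\<bar> \<partial>N)" by (rule integral_abs_bound)
  also have "\<dots> \<le> (\<integral>z. B * \<bar>L z - 1\<bar> \<partial>N)"
  proof (rule integral_mono)
    have "integrable N (\<lambda>z. L z * \<phi> z - \<phi> z)" using L\<phi>iN \<phi>iN by simp
    then have "integrable N (\<lambda>z. \<bar>L z * \<phi> z - \<phi> z\<bar>)" by (rule integrable_abs)
    then show "integrable N (\<lambda>z. \<bar>(L z - 1) * \<phi> z\<bar>)" by (simp add: left_diff_distrib)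
    show "integrable N (\<lambda>z. B * \<bar>L z - 1\<bar>)" using LiN by simp
    fix z show "\<bar>(L z - 1) * \<phi> z\<bar> \<le> B * \<bar>L z - 1\<bar>"
      using mult_right_mono[OF B[of z], of "\<bar>L z - 1\<bar>"] by (simp add: abs_mult mult.commute)
  qed
  also have "\<dots> = B * (\<integral>z. \<bar>L z - 1\<bar> \<partial>N)" by simp
  also have "(\<integral>z. \<bar>L z - 1\<bar> \<partial>N) \<le> sqrt (\<integral>z. (L z - 1)\<^sup>2 \<partial>N)"
    by (rule prob_abs_sq[OF N.prob_space_axioms])
       (auto simp: power2_diff LiN L2iN)
  also have "(\<integral>z. (L z - 1)\<^sup>2 \<partial>N) = exp s - 1"
  proof -
    have "(\<integral>z. (L z - 1)\<^sup>2 \<partial>N) = (\<integral>z. (L z)\<^sup>2 - 2 * L z + 1 \<partial>N)"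
      by (simp add: power2_diff algebra_simps)
    also have "\<dots> = exp s - 2 * 1 + 1" using LiN L2iN L1 L2 by (simp add: N.prob_space)
    finally show ?thesis by simp
  qed
  finally show ?thesis unfolding N_def s_def using B0 by (simp add: mult_left_mono)
qed



definition PR :: "(real^'p::finite) list \<Rightarrow> real^'p \<Rightarrow> real^'p" where
  "PR Rs v = (\<Sum>i<length Rs. (Rs!i \<bullet> v) *\<^sub>R Rs!i)"

lemma rank_cases:
  fixes M0 :: "real^'r::finite^'p::finite"
  shows "rank M0 = CARD('p) \<or> rank M0 < CARD('p)"
  using rank_bound[of M0] by linarith

lemma Rs_orth:
  fixes M0 :: "real^'r::finite^'p::finite"
  assumes R: "is_R M0 Rs" and i: "i < length Rs"
  shows "Rs!i \<bullet> (M0 *v z) = 0"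
proof (cases "rank M0 = CARD('p)")
  case True
  then have "Rs = [0]" using R unfolding is_R_def by auto
  then show ?thesis using i by simp
next
  case False
  then have lt: "rank M0 < CARD('p)" using rank_cases[of M0] by auto
  then have sp: "span (set Rs) = {x. transpose M0 *v x = 0}" using R unfolding is_R_def by auto
  have "Rs!i \<in> span (set Rs)" using i by (intro span_base) simp
  then have "transpose M0 *v Rs!i = 0" using sp by auto
  then have "Rs!i v* M0 = 0" by simp
  then show ?thesis by (metis dot_lmul_matrix inner_zero_left)
qed

lemma Rt_PR_inner:
  fixes M0 :: "real^'r::finite^'p::finite"
  assumes R: "is_R M0 Rs" and i: "i < length Rs"
  shows "Rs!i \<bullet> PR Rs x = Rs!i \<bullet> x"
proof (cases "rank M0 = CARD('p)")
  case True
  then have "Rs = [0]" using R unfolding is_R_def by auto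
  then show ?thesis using i by (simp add: PR_def)
next
  case False
  then have lt: "rank M0 < CARD('p)" using rank_cases[of M0] by auto
  then have on: "\<And>i j. i < length Rs \<Longrightarrow> j < length Rs \<Longrightarrow> Rs ! i \<bullet> Rs ! j = (if i = j then 1 else 0)"
    using R unfolding is_R_def by auto
  have "Rs!i \<bullet> PR Rs x = (\<Sum>j<length Rs. (Rs!j \<bullet> x) * (Rs!i \<bullet> Rs!j))"
    unfolding PR_def by (simp add: inner_sum_right)
  also have "\<dots> = (\<Sum>j<length Rs. (Rs!j \<bullet> x) * (if i = j then 1 else 0))"
    using on i by (intro sum.cong) auto
  also have "\<dots> = Rs!i \<bullet> x" using i by (simp add: if_distrib cong: if_cong)
  finally show ?thesis .
qed

lemma Rt_PR:
  fixes M0 :: "real^'r::finite^'p::finite"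
  assumes R: "is_R M0 Rs"
  shows "Rt_map Rs (PR Rs x) = Rt_map Rs x"
  unfolding Rt_map_def using Rt_PR_inner[OF R] by (intro restrict_ext) auto

lemma decomp_aux: fixes M0 :: "real^'r::finite^'p::finite"
  shows "\<exists>y z. y \<in> span (range ((*v) M0)) \<and> (\<forall>w\<in>span (range ((*v) M0)). orthogonal z w) \<and> u = y + z"
  by (meson orthogonal_subspace_decomp_exists)

lemma PR_range:
  fixes M0 :: "real^'r::finite^'p::finite"
  assumes R: "is_R M0 Rs"
  shows "v - PR Rs v \<in> range ((*v) M0)"
proof (cases "rank M0 = CARD('p)")
  case True
  then have "surj ((*v) M0)" using full_rank_surjective by blast
  then show ?thesis by simp
next
  case False
  then have lt: "rank M0 < CARD('p)" using rank_cases[of M0] by auto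
  then have sp: "span (set Rs) = {x. transpose M0 *v x = 0}" using R unfolding is_R_def by auto
  define u where "u = v - PR Rs v"
  have uR: "orthogonal u r" if "r \<in> set Rs" for r
  proof -
    obtain i where i: "i < length Rs" "r = Rs!i" using \<open>r \<in> set Rs\<close> by (auto simp: in_set_conv_nth)
    have "u \<bullet> Rs!i = Rs!i \<bullet> v - Rs!i \<bullet> PR Rs v"
      unfolding u_def by (metis inner_diff_left inner_commute)
    then show ?thesis using Rt_PR_inner[OF R i(1), of v] i unfolding orthogonal_def by simp
  qed
  have subsp: "subspace (range ((*v) M0))"
    by (rule linear_subspace_image[OF matrix_vector_mul_linear subspace_UNIV])
  obtain y z where y: "y \<in> span (range ((*v) M0))" and z: "\<And>w. w \<in> span (range ((*v) M0)) \<Longrightarrow> orthogonal z w"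
    and uyz: "u = y + z"
    using decomp_aux[of M0 u] by blast
  have zw: "z \<bullet> (M0 *v w) = 0" for w
  proof -
    have "M0 *v w \<in> span (range ((*v) M0))" by (rule span_base) (rule rangeI)
    then have "orthogonal z (M0 *v w)" by (rule z)
    then show ?thesis unfolding orthogonal_def .
  qed
  have "(z v* M0) \<bullet> w = 0" for w unfolding dot_lmul_matrix by (rule zw)
  from this[of "z v* M0"] have "z v* M0 = 0" by (simp only: inner_eq_zero_iff)
  then have "transpose M0 *v z = 0" by (simp only: transpose_matrix_vector)
  then have zs: "z \<in> span (set Rs)" unfolding sp by (simp only: mem_Collect_eq)
  have o1: "orthogonal u z" by (rule orthogonal_to_span[OF zs]) (rule uR)
  have o2: "orthogonal z y" by (rule z[OF y])
  have e1: "u \<bullet> z = y \<bullet> z + z \<bullet> z" unfolding uyz by (rule inner_add_left)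
  have e2: "u \<bullet> z = 0" using o1 unfolding orthogonal_def .
  have e3: "y \<bullet> z = 0" using o2 unfolding orthogonal_def by (simp only: inner_commute)
  have "z \<bullet> z = 0" using e1 e2 e3 by simp
  then have "z = 0" by simp
  have spr: "span (range ((*v) M0)) = range ((*v) M0)" by (rule span_eq_iff[THEN iffD2, OF subsp])
  have "u \<in> range ((*v) M0)" using y unfolding uyz \<open>z = 0\<close> spr by simp
  then show ?thesis unfolding u_def .
qed

lemma PR_shift:
  fixes M0 :: "real^'r::finite^'p::finite"
  assumes R: "is_R M0 Rs"
  shows "PR Rs (M0 *v z + v) = PR Rs v"
  unfolding PR_def using Rs_orth[OF R] by (intro sum.cong) (auto simp: inner_add_right)

lemma PR_Rt: "PR Rs x = (\<Sum>i<length Rs. Rt_map Rs x i *\<^sub>R Rs!i)"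
  unfolding PR_def Rt_map_def by simp



definition Tmap :: "(real^'p::finite \<Rightarrow> real) \<Rightarrow> real^'r::finite^'p \<Rightarrow> (real \<times> (real^'p)) \<times> (real^'r) \<Rightarrow> ('p,'r) outcome" where
  "Tmap f0 M0 = (\<lambda>((u, v), z). (u, v, M0 *v z + v, f0 (M0 *v z + v) + u, z))"

lemma mv_meas[measurable]: "(*v) (M::real^'n::finite^'m::finite) \<in> borel_measurable borel"
  by (rule borel_measurable_continuous_onI) (rule matrix_vector_mult_linear_continuous_on)

lemma mv_meas'[measurable (raw)]: "f \<in> borel_measurable M' \<Longrightarrow> (\<lambda>x. (M::real^'n::finite^'m::finite) *v f x) \<in> borel_measurable M'"
  using measurable_compose[OF _ mv_meas] by blast

lemma Tmap_alt: "Tmap f0 M0 x = (fst (fst x), snd (fst x), M0 *v snd x + snd (fst x), f0 (M0 *v snd x + snd (fst x)) + fst (fst x), snd x)"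
  unfolding Tmap_def by (cases x) auto

locale sdg =
  fixes f0 :: "real^'p::finite \<Rightarrow> real" and M0 :: "real^'r::finite^'p"
    and \<Lambda> :: "(real \<times> (real^'p)) measure" and N :: "(real^'r) measure"
  assumes f0[measurable]: "f0 \<in> borel_measurable borel"
    and \<Lambda>p: "prob_space \<Lambda>" and \<Lambda>s: "sets \<Lambda> = sets borel"
    and Np: "prob_space N" and Ns[measurable_cong]: "sets N = sets borel"
begin

abbreviation "P \<equiv> induced_dist f0 M0 \<Lambda> N"
abbreviation "T \<equiv> Tmap f0 M0"

lemma \<Lambda>s2[measurable_cong]: "sets \<Lambda> = sets (borel \<Otimes>\<^sub>M borel)"
  unfolding borel_prod by (rule \<Lambda>s)

lemma meas_\<Lambda>: "g \<in> measurable borel M' \<Longrightarrow> g \<in> measurable \<Lambda> M'"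
  by (subst measurable_cong_sets[OF \<Lambda>s refl])
lemma meas_N: "g \<in> measurable borel M' \<Longrightarrow> g \<in> measurable N M'"
  by (subst measurable_cong_sets[OF Ns refl])

sublocale L: prob_space \<Lambda> by (rule \<Lambda>p)
sublocale NN: prob_space N by (rule Np)
sublocale LN: pair_prob_space \<Lambda> N ..

lemma T_meas[measurable]: "T \<in> measurable (\<Lambda> \<Otimes>\<^sub>M N) borel"
  unfolding Tmap_alt[abs_def] by measurable

lemma P_def': "P = distr (\<Lambda> \<Otimes>\<^sub>M N) borel T"
  unfolding induced_dist_def Tmap_def ..

lemma sets_P[simp, measurable_cong]: "sets P = sets borel"
  unfolding P_def' by simp

lemma space_P[simp]: "space P = UNIV"
  unfolding P_def' by simp

lemma prob_P: "prob_space P"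
  unfolding P_def' by (rule LN.prob_space_distr) simp

lemma integral_P:
  fixes F :: "('p,'r) outcome \<Rightarrow> real"
  assumes [measurable]: "F \<in> borel_measurable borel"
  shows "(\<integral>w. F w \<partial>P) = (\<integral>x. F (T x) \<partial>(\<Lambda> \<Otimes>\<^sub>M N))"
  unfolding P_def' by (rule integral_distr) auto

lemma integrable_P:
  fixes F :: "('p,'r) outcome \<Rightarrow> real"
  assumes [measurable]: "F \<in> borel_measurable borel"
  shows "integrable P F \<longleftrightarrow> integrable (\<Lambda> \<Otimes>\<^sub>M N) (\<lambda>x. F (T x))"
  unfolding P_def' by (rule integrable_distr_eq) auto

lemma distr_fst: "distr (\<Lambda> \<Otimes>\<^sub>M N) \<Lambda> fst = \<Lambda>"
  by (rule NN.distr_pair_fst)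

lemma integral_fstonly:
  fixes g :: "real \<times> (real^'p) \<Rightarrow> real"
  assumes [measurable]: "g \<in> borel_measurable borel"
  shows "(\<integral>x. g (fst x) \<partial>(\<Lambda> \<Otimes>\<^sub>M N)) = (\<integral>x. g x \<partial>\<Lambda>)"
proof -
  have "(\<integral>x. g x \<partial>\<Lambda>) = (\<integral>x. g x \<partial>distr (\<Lambda> \<Otimes>\<^sub>M N) \<Lambda> fst)" by (simp add: distr_fst)
  also have "\<dots> = (\<integral>x. g (fst x) \<partial>(\<Lambda> \<Otimes>\<^sub>M N))" by (rule integral_distr) (auto intro: meas_\<Lambda>)
  finally show ?thesis by simp
qed

lemma integrable_fstonly:
  fixes g :: "real \<times> (real^'p) \<Rightarrow> real"
  assumes [measurable]: "g \<in> borel_measurable borel"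
  shows "integrable (\<Lambda> \<Otimes>\<^sub>M N) (\<lambda>x. g (fst x)) \<longleftrightarrow> integrable \<Lambda> g"
proof -
  have "integrable \<Lambda> g \<longleftrightarrow> integrable (distr (\<Lambda> \<Otimes>\<^sub>M N) \<Lambda> fst) g" by (simp add: distr_fst)
  also have "\<dots> \<longleftrightarrow> integrable (\<Lambda> \<Otimes>\<^sub>M N) (\<lambda>x. g (fst x))" by (rule integrable_distr_eq) (auto intro: meas_\<Lambda>)
  finally show ?thesis by simp
qed

lemma obsX_meas[measurable]: "obsX \<in> borel_measurable borel"
  unfolding obsX_def[abs_def] by (intro borel_measurable_continuous_onI continuous_intros)
lemma obsV_meas[measurable]: "obsV \<in> borel_measurable borel"
  unfolding obsV_def[abs_def] by (intro borel_measurable_continuous_onI continuous_intros)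
lemma obsU_meas[measurable]: "obsU \<in> borel_measurable borel"
  unfolding obsU_def[abs_def] by (intro borel_measurable_continuous_onI continuous_intros)

lemma obs_T[simp]: "obsX (T ((u, v), z)) = M0 *v z + v" "obsV (T ((u, v), z)) = v" "obsU (T ((u, v), z)) = u"
  unfolding Tmap_def obsX_def obsV_def obsU_def by simp_all

end


lemma Rt_meas[measurable]: "Rt_map Rs \<in> measurable borel (PiM {..<length Rs} (\<lambda>_. borel))"
  unfolding Rt_map_def[abs_def]
  by (rule measurable_restrict) (intro borel_measurable_continuous_onI continuous_intros)

lemma Lsum_meas: "(\<lambda>y. (\<Sum>i<length Rs. y i *\<^sub>R (Rs!i :: real^'p::finite))) \<in> measurable (PiM {..<length Rs} (\<lambda>_. borel)) borel"
  by measurable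

lemma Rt_space: "(\<lambda>w. Rt_map Rs (F w)) \<in> X \<rightarrow> space (PiM {..<length Rs} (\<lambda>_. borel))"
  by (auto simp: space_PiM Rt_map_def)

context sdg
begin

abbreviation "FX \<equiv> vimage_algebra (space P) obsX borel"
abbreviation "FR Rs \<equiv> vimage_algebra (space P) (\<lambda>w. Rt_map Rs (obsX w)) (PiM {..<length Rs} (\<lambda>_. borel))"

lemma obsX_P[measurable]: "obsX \<in> borel_measurable P"
  by (subst measurable_cong_sets[OF sets_P refl]) simp

lemma RX_P: "(\<lambda>w. Rt_map Rs (obsX w)) \<in> measurable P (PiM {..<length Rs} (\<lambda>_. borel))"
  by (subst measurable_cong_sets[OF sets_P refl]) simp

lemma subFX: "subalgebra P FX"
  using sets_image_in_sets[OF refl obsX_P] unfolding subalgebra_def by simp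

lemma subFR: "subalgebra P (FR Rs)"
  using sets_image_in_sets[OF refl RX_P] unfolding subalgebra_def by simp

lemma X_FX: "obsX \<in> measurable FX borel"
  by (rule measurable_vimage_algebra1) simp

lemma subRX: "subalgebra FX (FR Rs)"
proof -
  have "(\<lambda>w. Rt_map Rs (obsX w)) \<in> measurable FX (PiM {..<length Rs} (\<lambda>_. borel))"
    using measurable_compose[OF X_FX Rt_meas] by simp
  from sets_image_in_sets[OF _ this] show ?thesis unfolding subalgebra_def by simp
qed

lemma sfFX: "sigma_finite_subalgebra P FX"
proof -
  interpret prob_space P by (rule prob_P)
  interpret finite_measure_subalgebra P FX by unfold_locales (rule subFX)
  show ?thesis ..
qed

lemma sfFR: "sigma_finite_subalgebra P (FR Rs)"
proof -
  interpret prob_space P by (rule prob_P)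
  interpret finite_measure_subalgebra P "FR Rs" by unfold_locales (rule subFR)
  show ?thesis ..
qed

lemma PR_FR: "(\<lambda>w. PR Rs (obsX w)) \<in> measurable (FR Rs) borel"
proof -
  have "(\<lambda>w. Rt_map Rs (obsX w)) \<in> measurable (FR Rs) (PiM {..<length Rs} (\<lambda>_. borel))"
    by (rule measurable_vimage_algebra1) (rule Rt_space)
  from measurable_compose[OF this Lsum_meas] show ?thesis unfolding PR_Rt by simp
qed


definition emb :: "real^'p::finite \<Rightarrow> ('p, 'r::finite) outcome" where
  "emb x = (0, 0, x, 0, 0)"

lemma obsX_emb[simp]: "obsX (emb x) = x" unfolding emb_def obsX_def by simp

lemma emb_meas[measurable]: "emb \<in> borel_measurable borel"
  unfolding emb_def[abs_def] by (intro borel_measurable_continuous_onI continuous_intros)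

lemma meas_P: "g \<in> measurable borel M' \<Longrightarrow> g \<in> measurable P M'"
  by (subst measurable_cong_sets[OF sets_P refl])
lemma meas_P': "g \<in> measurable P M' \<Longrightarrow> g \<in> measurable borel M'"
  by (subst (asm) measurable_cong_sets[OF sets_P refl])

lemma snd_borel: "snd \<in> measurable (borel :: ('a::second_countable_topology \<times> 'b::second_countable_topology) measure) borel"
  by (intro borel_measurable_continuous_onI continuous_intros)

lemma abs_bnd: "\<bar>x::real\<bar> \<le> c \<Longrightarrow> -c \<le> x \<and> x \<le> c" by auto

lemma clamp_abs: "c \<ge> 0 \<Longrightarrow> \<bar>max (-c) (min c (x::real))\<bar> \<le> c" by auto

lemma bounded_main:
  fixes h :: "real^'p \<Rightarrow> real" and Rs :: "(real^'p) list" and a :: "real^'p \<Rightarrow> real^'r"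
    and \<delta> :: "real^'r \<Rightarrow> real" and c :: real
  assumes R: "is_R M0 Rs"
    and a: "\<And>v. M0 *v a v = v - PR Rs v" and am[measurable]: "a \<in> borel_measurable borel"
    and \<delta>m[measurable]: "\<delta> \<in> borel_measurable borel" and \<delta>0: "\<And>x. \<delta> x \<ge> 0"
    and gb: "\<And>\<phi> B b. \<phi> \<in> borel_measurable borel \<Longrightarrow> (\<And>z. \<bar>\<phi> z\<bar> \<le> B) \<Longrightarrow>
               \<bar>(\<integral>z. \<phi> (z + b) \<partial>N) - (\<integral>z. \<phi> z \<partial>N)\<bar> \<le> B * \<delta> b"
    and hm[measurable]: "h \<in> borel_measurable borel" and hc: "\<And>v. \<bar>h v\<bar> \<le> c"
  shows "(\<integral>w. (real_cond_exp P (FR Rs) (\<lambda>w. h (obsV w)) w - real_cond_exp P FX (\<lambda>w. h (obsV w)) w)\<^sup>2 \<partial>P)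
          \<le> (\<integral>x. 2 * c * min (4 * c) (2 * c * \<delta> (a (snd x))) \<partial>\<Lambda>)"
proof -
  interpret Pp: prob_space P by (rule prob_P)
  interpret X: sigma_finite_subalgebra P FX by (rule sfFX)
  interpret RR: sigma_finite_subalgebra P "FR Rs" by (rule sfFR)
  have c0: "c \<ge> 0" using hc[of 0] by linarith
  define H where "H w = h (obsV w)" for w :: "('p,'r) outcome"
  have HmB[measurable]: "H \<in> borel_measurable borel" unfolding H_def by simp
  have Hm[measurable]: "H \<in> borel_measurable P" by (rule meas_P) simp
  have Hb: "\<bar>H w\<bar> \<le> c" for w unfolding H_def by (rule hc)
  have Hi: "integrable P H" by (rule Pp.integrable_const_bound[where B=c]) (auto simp: Hb)
  define Y where "Y = real_cond_exp P (FR Rs) H"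
  define Y' where "Y' w = max (-c) (min c (Y w))" for w
  have YFR[measurable]: "Y \<in> borel_measurable (FR Rs)" unfolding Y_def by (rule borel_measurable_cond_exp)
  have Y'FR[measurable]: "Y' \<in> borel_measurable (FR Rs)" unfolding Y'_def[abs_def] by measurable
  have Y'P[measurable]: "Y' \<in> borel_measurable P" by (rule measurable_from_subalg[OF subFR Y'FR])
  have Y'FX[measurable]: "Y' \<in> borel_measurable FX" by (rule measurable_from_subalg[OF subRX Y'FR])
  have Y'b: "\<bar>Y' w\<bar> \<le> c" for w unfolding Y'_def using c0 by (rule clamp_abs)
  have Y'i: "integrable P Y'" by (rule Pp.integrable_const_bound[where B=c]) (auto simp: Y'b)
  have "AE w in P. Y w \<le> c" unfolding Y_def
    by (rule RR.real_cond_exp_le_c[OF Hi], intro AE_I2) (use abs_bnd[OF Hb] in blast)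
  moreover have "AE w in P. Y w \<ge> -c" unfolding Y_def
    by (rule RR.real_cond_exp_ge_c[OF Hi], intro AE_I2) (use abs_bnd[OF Hb] in blast)
  ultimately have YY': "AE w in P. Y w = Y' w" unfolding Y'_def by eventually_elim auto
  define D where "D w = H w - Y' w" for w
  have Dm[measurable]: "D \<in> borel_measurable P" unfolding D_def[abs_def] by measurable
  have Db: "\<bar>D w\<bar> \<le> 2 * c" for w unfolding D_def using Hb[of w] Y'b[of w] by linarith
  have Di: "integrable P D" by (rule Pp.integrable_const_bound[where B="2*c"]) (auto simp: Db)
  define Q where "Q = real_cond_exp P FX D"
  define Q' where "Q' w = max (-(2*c)) (min (2*c) (Q w))" for w
  have QFX[measurable]: "Q \<in> borel_measurable FX" unfolding Q_def by (rule borel_measurable_cond_exp)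
  have Q'FX[measurable]: "Q' \<in> borel_measurable FX" unfolding Q'_def[abs_def] by measurable
  have Q'P[measurable]: "Q' \<in> borel_measurable P" by (rule measurable_from_subalg[OF subFX Q'FX])
  have Q'b: "\<bar>Q' w\<bar> \<le> 2 * c" for w unfolding Q'_def using c0 by (intro clamp_abs) simp
  have "AE w in P. Q w \<le> 2 * c" unfolding Q_def
    by (rule X.real_cond_exp_le_c[OF Di], intro AE_I2) (use abs_bnd[OF Db] in blast)
  moreover have "AE w in P. Q w \<ge> -(2 * c)" unfolding Q_def
    by (rule X.real_cond_exp_ge_c[OF Di], intro AE_I2) (use abs_bnd[OF Db] in blast)
  ultimately have QQ': "AE w in P. Q w = Q' w" unfolding Q'_def by eventually_elim auto
  have c1: "(\<integral>w. (real_cond_exp P (FR Rs) (\<lambda>w. h (obsV w)) w - real_cond_exp P FX (\<lambda>w. h (obsV w)) w)\<^sup>2 \<partial>P)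
      = (\<integral>w. (Q' w)\<^sup>2 \<partial>P)"
  proof (rule integral_cong_AE)
    have e1: "AE w in P. real_cond_exp P FX D w = real_cond_exp P FX H w - real_cond_exp P FX Y' w"
      unfolding D_def[abs_def] by (rule X.real_cond_exp_diff[OF Hi Y'i])
    have e2: "AE w in P. real_cond_exp P FX Y' w = Y' w" by (rule X.real_cond_exp_F_meas[OF Y'i Y'FX])
    show "AE w in P. (real_cond_exp P (FR Rs) (\<lambda>w. h (obsV w)) w - real_cond_exp P FX (\<lambda>w. h (obsV w)) w)\<^sup>2 = (Q' w)\<^sup>2"
      using e1 e2 YY' QQ' unfolding Q_def Y_def H_def[abs_def]
      by eventually_elim (metis power2_commute)
  qed (auto intro: meas_P)
  have QDb: "\<bar>Q' w * D w\<bar> \<le> 2*c*(2*c)" for w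
    unfolding abs_mult by (rule mult_mono[OF Q'b Db]) (use c0 in auto)
  have QDi: "integrable P (\<lambda>w. Q' w * D w)"
    by (rule Pp.integrable_const_bound[where B="2*c*(2*c)"]) (use QDb in auto)
  have c2: "(\<integral>w. (Q' w)\<^sup>2 \<partial>P) = (\<integral>w. Q' w * D w \<partial>P)"
  proof -
    have "(\<integral>w. Q' w * D w \<partial>P) = (\<integral>w. Q' w * real_cond_exp P FX D w \<partial>P)"
      by (rule X.real_cond_exp_intg(2)[OF QDi Q'FX Dm, symmetric])
    also have "\<dots> = (\<integral>w. (Q' w)\<^sup>2 \<partial>P)"
      by (rule integral_cong_AE) (use QQ' in \<open>auto simp: Q_def power2_eq_square\<close>)
    finally show ?thesis ..
  qed
  have Q'fib: "Q' w = Q' (emb (obsX w))" for w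
    by (rule vimage_fiber[of Q' obsX borel]) (use Q'FX in simp_all)
  have Y'fib: "Y' w = Y' (emb (PR Rs (obsX w)))" for w
    by (rule vimage_fiber[of Y' "\<lambda>w. Rt_map Rs (obsX w)" "PiM {..<length Rs} (\<lambda>_. borel)"])
       (use Y'FR Rt_space in \<open>simp_all add: Rt_PR[OF R]\<close>)
  define \<phi> where "\<phi> x = Q' (emb x)" for x
  define yt where "yt x = Y' (emb x)" for x
  have \<phi>m[measurable]: "\<phi> \<in> borel_measurable borel"
    unfolding \<phi>_def[abs_def] using meas_P'[OF Q'P] by measurable
  have ytm[measurable]: "yt \<in> borel_measurable borel"
    unfolding yt_def[abs_def] using meas_P'[OF Y'P] by measurable
  have \<phi>b: "\<bar>\<phi> x\<bar> \<le> 2 * c" for x unfolding \<phi>_def by (rule Q'b)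
  have ytb: "\<bar>yt x\<bar> \<le> c" for x unfolding yt_def by (rule Y'b)
  define d where "d v = h v - yt (PR Rs v)" for v
  have PRm[measurable]: "PR Rs \<in> borel_measurable borel"
    unfolding PR_def[abs_def] by measurable
  have dm[measurable]: "d \<in> borel_measurable borel" unfolding d_def[abs_def] by measurable
  have db: "\<bar>d v\<bar> \<le> 2 * c" for v unfolding d_def using hc[of v] ytb[of "PR Rs v"] by linarith
  have DT: "D (T x) = d (snd (fst x))" for x
  proof -
    obtain u v z where x: "x = ((u, v), z)" by (metis prod.collapse)
    have "Y' (T x) = yt (PR Rs v)" unfolding yt_def
      by (subst Y'fib) (simp add: x PR_shift[OF R])
    then show ?thesis unfolding D_def H_def d_def by (simp add: x)
  qed
  have QT: "Q' (T x) = \<phi> (M0 *v snd x + snd (fst x))" for x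
  proof -
    obtain u v z where x: "x = ((u, v), z)" by (metis prod.collapse)
    show ?thesis unfolding \<phi>_def by (subst Q'fib) (simp add: x)
  qed
  define \<psi> where "\<psi> v = (\<integral>z. \<phi> (M0 *v z + v) \<partial>N)" for v
  have \<psi>m[measurable]: "\<psi> \<in> borel_measurable borel"
    unfolding \<psi>_def[abs_def] by measurable
  have \<psi>b: "\<bar>\<psi> v\<bar> \<le> 2 * c" for v
  proof -
    have "\<bar>\<psi> v\<bar> \<le> (\<integral>z. \<bar>\<phi> (M0 *v z + v)\<bar> \<partial>N)" unfolding \<psi>_def by (rule integral_abs_bound)
    also have "\<dots> \<le> (\<integral>z. 2 * c \<partial>N)"
      by (rule integral_mono) (auto simp: \<phi>b intro!: NN.integrable_const_bound[where B="2*c"] meas_N)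
    also have "\<dots> = 2 * c" by (simp add: NN.prob_space)
    finally show ?thesis .
  qed
  have dpsi_b: "\<bar>d v * \<psi> w\<bar> \<le> 2*c*(2*c)" for v w
    unfolding abs_mult by (rule mult_mono[OF db \<psi>b]) (use c0 in auto)
  have c3: "(\<integral>w. Q' w * D w \<partial>P) = (\<integral>x. d (snd x) * \<psi> (snd x) \<partial>\<Lambda>)"
  proof -
    have "(\<integral>w. Q' w * D w \<partial>P) = (\<integral>x. Q' (T x) * D (T x) \<partial>(\<Lambda> \<Otimes>\<^sub>M N))"
      by (rule integral_P) (use meas_P'[OF Q'P] meas_P'[OF Dm] in measurable)
    also have "\<dots> = (\<integral>x. \<phi> (M0 *v snd x + snd (fst x)) * d (snd (fst x)) \<partial>(\<Lambda> \<Otimes>\<^sub>M N))"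
      by (simp add: QT DT)
    also have "\<dots> = (\<integral>y. (\<integral>z. \<phi> (M0 *v z + snd y) * d (snd y) \<partial>N) \<partial>\<Lambda>)"
    proof -
      have b: "\<bar>\<phi> (M0 *v snd x + snd (fst x)) * d (snd (fst x))\<bar> \<le> 2*c*(2*c)" for x :: "(real \<times> (real^'p)) \<times> (real^'r)"
        unfolding abs_mult by (rule mult_mono[OF \<phi>b db]) (use c0 in auto)
      have I: "integrable (\<Lambda> \<Otimes>\<^sub>M N) (\<lambda>x. \<phi> (M0 *v snd x + snd (fst x)) * d (snd (fst x)))"
        by (rule LN.integrable_const_bound[where B="2*c*(2*c)"]) (use b in auto)
      show ?thesis using LN.integral_fst'[OF I] by simp
    qed
    also have "\<dots> = (\<integral>x. d (snd x) * \<psi> (snd x) \<partial>\<Lambda>)"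
      unfolding \<psi>_def by (simp add: mult.commute)
    finally show ?thesis .
  qed
  define chi where "chi w = \<psi> (PR Rs (obsX w))" for w :: "('p,'r) outcome"
  have chiFR[measurable]: "chi \<in> borel_measurable (FR Rs)"
    unfolding chi_def[abs_def] using measurable_compose[OF PR_FR \<psi>m] by simp
  have chiP[measurable]: "chi \<in> borel_measurable P" by (rule measurable_from_subalg[OF subFR chiFR])
  have chib: "\<bar>chi w\<bar> \<le> 2 * c" for w unfolding chi_def by (rule \<psi>b)
  have c4: "(\<integral>x. d (snd x) * \<psi> (PR Rs (snd x)) \<partial>\<Lambda>) = 0"
  proof -
    have Hchi: "integrable P (\<lambda>w. chi w * H w)"
    proof (rule Pp.integrable_const_bound[where B="2*c*c"])
      show "AE w in P. norm (chi w * H w) \<le> 2*c*c"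
        using c0 by (intro AE_I2) (simp add: abs_mult mult_mono[OF chib Hb])
    qed simp
    have Ychi: "integrable P (\<lambda>w. chi w * Y' w)"
    proof (rule Pp.integrable_const_bound[where B="2*c*c"])
      show "AE w in P. norm (chi w * Y' w) \<le> 2*c*c"
        using c0 by (intro AE_I2) (simp add: abs_mult mult_mono[OF chib Y'b])
    qed simp
    have "(\<integral>w. chi w * Y' w \<partial>P) = (\<integral>w. chi w * real_cond_exp P (FR Rs) H w \<partial>P)"
      by (rule integral_cong_AE) (use YY' in \<open>auto simp: Y_def\<close>)
    also have "\<dots> = (\<integral>w. chi w * H w \<partial>P)"
      by (rule RR.real_cond_exp_intg(2)[OF Hchi chiFR Hm])
    finally have eq: "(\<integral>w. chi w * Y' w \<partial>P) = (\<integral>w. chi w * H w \<partial>P)" .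
    have "(\<integral>w. D w * chi w \<partial>P) = (\<integral>w. chi w * H w - chi w * Y' w \<partial>P)"
      unfolding D_def by (simp add: algebra_simps)
    also have "\<dots> = 0" using Hchi Ychi eq by simp
    finally have z: "(\<integral>w. D w * chi w \<partial>P) = 0" .
    have "(\<integral>w. D w * chi w \<partial>P) = (\<integral>x. D (T x) * chi (T x) \<partial>(\<Lambda> \<Otimes>\<^sub>M N))"
      by (rule integral_P) (use meas_P'[OF chiP] meas_P'[OF Dm] in measurable)
    also have "\<dots> = (\<integral>x. (\<lambda>y. d (snd y) * \<psi> (PR Rs (snd y))) (fst x) \<partial>(\<Lambda> \<Otimes>\<^sub>M N))"
    proof (rule Bochner_Integration.integral_cong[OF refl])
      fix x :: "(real \<times> (real^'p)) \<times> (real^'r)"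
      obtain u v z where x: "x = ((u, v), z)" by (metis prod.collapse)
      show "D (T x) * chi (T x) = (\<lambda>y. d (snd y) * \<psi> (PR Rs (snd y))) (fst x)"
        unfolding DT chi_def by (simp add: x PR_shift[OF R])
    qed
    also have "\<dots> = (\<integral>x. d (snd x) * \<psi> (PR Rs (snd x)) \<partial>\<Lambda>)"
    proof (rule integral_fstonly)
      have "(\<lambda>v. d v * \<psi> (PR Rs v)) \<in> borel_measurable borel" by measurable
      have s: "(snd :: real \<times> (real^'p) \<Rightarrow> real^'p) \<in> borel_measurable borel" by (rule snd_borel)
      show "(\<lambda>y::real \<times> (real^'p). d (snd y) * \<psi> (PR Rs (snd y))) \<in> borel_measurable borel"
        using measurable_compose[OF s \<open>(\<lambda>v. d v * \<psi> (PR Rs v)) \<in> borel_measurable borel\<close>] by simp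
    qed
    finally show ?thesis using z by simp
  qed
  have c5: "\<bar>\<psi> v - \<psi> (PR Rs v)\<bar> \<le> min (4 * c) (2 * c * \<delta> (a v))" for v
  proof -
    define f where "f z = \<phi> (M0 *v z + PR Rs v)" for z
    have fm: "f \<in> borel_measurable borel" unfolding f_def[abs_def] by measurable
    have fb: "\<bar>f z\<bar> \<le> 2 * c" for z unfolding f_def by (rule \<phi>b)
    have "M0 *v (z + a v) + PR Rs v = M0 *v z + v" for z
      by (simp add: matrix_vector_right_distrib a)
    then have e1: "\<psi> v = (\<integral>z. f (z + a v) \<partial>N)" unfolding \<psi>_def f_def by simp
    have e2: "\<psi> (PR Rs v) = (\<integral>z. f z \<partial>N)" unfolding \<psi>_def f_def ..
    have "\<bar>\<psi> v - \<psi> (PR Rs v)\<bar> \<le> 2 * c * \<delta> (a v)" unfolding e1 e2 by (rule gb[OF fm fb])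
    moreover have "\<bar>\<psi> v - \<psi> (PR Rs v)\<bar> \<le> 4 * c" using \<psi>b[of v] \<psi>b[of "PR Rs v"] by linarith
    ultimately show ?thesis by simp
  qed
  have i1: "integrable \<Lambda> (\<lambda>x. d (snd x) * \<psi> (snd x))"
    by (rule L.integrable_const_bound[where B="2*c*(2*c)"]) (use dpsi_b in auto)
  have i2: "integrable \<Lambda> (\<lambda>x. d (snd x) * \<psi> (PR Rs (snd x)))"
    by (rule L.integrable_const_bound[where B="2*c*(2*c)"]) (use dpsi_b in auto)
  have i3: "integrable \<Lambda> (\<lambda>x. 2 * c * min (4 * c) (2 * c * \<delta> (a (snd x))))"
  proof (rule L.integrable_const_bound[where B="2*c*(4*c)"])
    show "AE x in \<Lambda>. norm (2 * c * min (4 * c) (2 * c * \<delta> (a (snd x)))) \<le> 2*c*(4*c)"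
    proof (intro AE_I2)
      fix x :: "real \<times> (real^'p)"
      have "0 \<le> 2 * c * \<delta> (a (snd x))" using c0 \<delta>0 by simp
      then have m: "\<bar>min (4 * c) (2 * c * \<delta> (a (snd x)))\<bar> \<le> 4 * c" using c0 by auto
      show "norm (2 * c * min (4 * c) (2 * c * \<delta> (a (snd x)))) \<le> 2*c*(4*c)"
        unfolding real_norm_def abs_mult using mult_left_mono[OF m, of "2*c"] c0 by simp
    qed
  qed measurable
  have "(\<integral>w. (Q' w)\<^sup>2 \<partial>P) = (\<integral>x. d (snd x) * \<psi> (snd x) \<partial>\<Lambda>) - (\<integral>x. d (snd x) * \<psi> (PR Rs (snd x)) \<partial>\<Lambda>)"
    using c2 c3 c4 by simp
  also have "\<dots> = (\<integral>x. d (snd x) * (\<psi> (snd x) - \<psi> (PR Rs (snd x))) \<partial>\<Lambda>)"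
    using i1 i2 by (simp add: right_diff_distrib)
  also have "\<dots> \<le> (\<integral>x. 2 * c * min (4 * c) (2 * c * \<delta> (a (snd x))) \<partial>\<Lambda>)"
  proof (rule integral_mono)
    show "integrable \<Lambda> (\<lambda>x. d (snd x) * (\<psi> (snd x) - \<psi> (PR Rs (snd x))))"
      using i1 i2 by (simp add: right_diff_distrib)
    show "integrable \<Lambda> (\<lambda>x. 2 * c * min (4 * c) (2 * c * \<delta> (a (snd x))))" by (rule i3)
    fix x :: "real \<times> (real^'p)"
    have "d (snd x) * (\<psi> (snd x) - \<psi> (PR Rs (snd x))) \<le> \<bar>d (snd x)\<bar> * \<bar>\<psi> (snd x) - \<psi> (PR Rs (snd x))\<bar>"
      by (metis abs_ge_self abs_mult)
    also have "\<dots> \<le> 2 * c * min (4 * c) (2 * c * \<delta> (a (snd x)))"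
      by (rule mult_mono[OF db c5]) (use c0 in auto)
    finally show "d (snd x) * (\<psi> (snd x) - \<psi> (PR Rs (snd x))) \<le> 2 * c * min (4 * c) (2 * c * \<delta> (a (snd x)))" .
  qed
  finally show ?thesis using c1 by simp
qed


lemma sq_sum_le: "((x::real) + y)\<^sup>2 \<le> 2 * x\<^sup>2 + 2 * y\<^sup>2"
  by (smt (verit) power2_diff power2_sum zero_le_power2)
lemma sq_diff_le: "((x::real) - y)\<^sup>2 \<le> 2 * x\<^sup>2 + 2 * y\<^sup>2"
  by (smt (verit) power2_diff power2_sum zero_le_power2)

lemma obsV_T': "obsV (T x) = snd (fst x)"
  by (cases x) (auto simp: Tmap_def obsV_def split: prod.splits)

lemma general_bound:
  fixes g h :: "real^'p \<Rightarrow> real" and Rs :: "(real^'p) list" and a :: "real^'p \<Rightarrow> real^'r"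
    and \<delta> :: "real^'r \<Rightarrow> real" and c :: real
  assumes R: "is_R M0 Rs"
    and a: "\<And>v. M0 *v a v = v - PR Rs v" and am[measurable]: "a \<in> borel_measurable borel"
    and \<delta>m[measurable]: "\<delta> \<in> borel_measurable borel" and \<delta>0: "\<And>x. \<delta> x \<ge> 0"
    and gb: "\<And>\<phi> B b. \<phi> \<in> borel_measurable borel \<Longrightarrow> (\<And>z. \<bar>\<phi> z\<bar> \<le> B) \<Longrightarrow>
               \<bar>(\<integral>z. \<phi> (z + b) \<partial>N) - (\<integral>z. \<phi> z \<partial>N)\<bar> \<le> B * \<delta> b"
    and hm[measurable]: "h \<in> borel_measurable borel" and hc: "\<And>v. \<bar>h v\<bar> \<le> c"
    and gm[measurable]: "g \<in> borel_measurable borel" and g2: "integrable \<Lambda> (\<lambda>x. (g (snd x))\<^sup>2)"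
  shows "crit Rs g P \<le> 2 * (\<integral>x. 2 * c * min (4 * c) (2 * c * \<delta> (a (snd x))) \<partial>\<Lambda>)
                         + 8 * (\<integral>x. (g (snd x) - h (snd x))\<^sup>2 \<partial>\<Lambda>)"
proof -
  interpret Pp: prob_space P by (rule prob_P)
  interpret X: sigma_finite_subalgebra P FX by (rule sfFX)
  interpret RR: sigma_finite_subalgebra P "FR Rs" by (rule sfFR)
  have c0: "c \<ge> 0" using hc[of 0] by linarith
  define G where "G w = g (obsV w)" for w :: "('p,'r) outcome"
  define H where "H w = h (obsV w)" for w :: "('p,'r) outcome"
  define E where "E w = G w - H w" for w
  have GmB[measurable]: "G \<in> borel_measurable borel" unfolding G_def by simp
  have HmB[measurable]: "H \<in> borel_measurable borel" unfolding H_def by simp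
  have EmB[measurable]: "E \<in> borel_measurable borel" unfolding E_def[abs_def] by simp
  have Gm[measurable]: "G \<in> borel_measurable P" by (rule meas_P) simp
  have Hm[measurable]: "H \<in> borel_measurable P" by (rule meas_P) simp
  have Em[measurable]: "E \<in> borel_measurable P" by (rule meas_P) simp
  have sq_int: "integrable P (\<lambda>w. (f (obsV w))\<^sup>2) \<longleftrightarrow> integrable \<Lambda> (\<lambda>x. (f (snd x))\<^sup>2)"
    if [measurable]: "f \<in> borel_measurable borel" for f :: "real^'p \<Rightarrow> real"
  proof -
    have "integrable P (\<lambda>w. (f (obsV w))\<^sup>2) \<longleftrightarrow> integrable (\<Lambda> \<Otimes>\<^sub>M N) (\<lambda>x. (f (obsV (T x)))\<^sup>2)"
      by (rule integrable_P) measurable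
    also have "\<dots> \<longleftrightarrow> integrable (\<Lambda> \<Otimes>\<^sub>M N) (\<lambda>x. (\<lambda>y. (f (snd y))\<^sup>2) (fst x))"
      by (simp add: obsV_T')
    also have "\<dots> \<longleftrightarrow> integrable \<Lambda> (\<lambda>x. (f (snd x))\<^sup>2)"
    proof (rule integrable_fstonly)
      have s: "(snd :: real \<times> (real^'p) \<Rightarrow> real^'p) \<in> borel_measurable borel" by (rule snd_borel)
      show "(\<lambda>y::real \<times> (real^'p). (f (snd y))\<^sup>2) \<in> borel_measurable borel"
        using measurable_compose[OF s, of "\<lambda>v. (f v)\<^sup>2"] by simp
    qed
    finally show ?thesis .
  qed
  have sq_integral: "(\<integral>w. (f (obsV w))\<^sup>2 \<partial>P) = (\<integral>x. (f (snd x))\<^sup>2 \<partial>\<Lambda>)"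
    if [measurable]: "f \<in> borel_measurable borel" for f :: "real^'p \<Rightarrow> real"
  proof -
    have "(\<integral>w. (f (obsV w))\<^sup>2 \<partial>P) = (\<integral>x. (f (obsV (T x)))\<^sup>2 \<partial>(\<Lambda> \<Otimes>\<^sub>M N))"
      by (rule integral_P) measurable
    also have "\<dots> = (\<integral>x. (\<lambda>y. (f (snd y))\<^sup>2) (fst x) \<partial>(\<Lambda> \<Otimes>\<^sub>M N))"
      by (simp add: obsV_T')
    also have "\<dots> = (\<integral>x. (f (snd x))\<^sup>2 \<partial>\<Lambda>)"
    proof (rule integral_fstonly)
      have s: "(snd :: real \<times> (real^'p) \<Rightarrow> real^'p) \<in> borel_measurable borel" by (rule snd_borel)
      show "(\<lambda>y::real \<times> (real^'p). (f (snd y))\<^sup>2) \<in> borel_measurable borel"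
        using measurable_compose[OF s, of "\<lambda>v. (f v)\<^sup>2"] by simp
    qed
    finally show ?thesis .
  qed
  have G2: "integrable P (\<lambda>w. (G w)\<^sup>2)" unfolding G_def using sq_int[of g] g2 by simp
  have hb2: "\<bar>(h (snd x))\<^sup>2\<bar> \<le> c * c" for x :: "real \<times> (real^'p)"
  proof -
    have "\<bar>h (snd x)\<bar> * \<bar>h (snd x)\<bar> \<le> c * c" using hc[of "snd x"] c0 by (intro mult_mono) auto
    then show ?thesis by (simp add: power2_eq_square abs_mult)
  qed
  have h2: "integrable \<Lambda> (\<lambda>x. (h (snd x))\<^sup>2)"
    by (rule L.integrable_const_bound[where B="c*c"]) (use hb2 in auto)
  have H2: "integrable P (\<lambda>w. (H w)\<^sup>2)" unfolding H_def using sq_int[of h] h2 by simp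
  have e2: "integrable \<Lambda> (\<lambda>x. (g (snd x) - h (snd x))\<^sup>2)"
  proof (rule Bochner_Integration.integrable_bound[OF Bochner_Integration.integrable_add[OF integrable_mult_right[OF g2, of 2] integrable_mult_right[OF h2, of 2]]])
    show "AE x in \<Lambda>. norm ((g (snd x) - h (snd x))\<^sup>2) \<le> norm (2 * (g (snd x))\<^sup>2 + 2 * (h (snd x))\<^sup>2)"
      by (intro AE_I2) (simp add: sq_diff_le)
  qed measurable
  have E2: "integrable P (\<lambda>w. (E w)\<^sup>2)" using sq_int[of "\<lambda>v. g v - h v"] e2 unfolding E_def G_def H_def by simp
  have E2v: "(\<integral>w. (E w)\<^sup>2 \<partial>P) = (\<integral>x. (g (snd x) - h (snd x))\<^sup>2 \<partial>\<Lambda>)"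
    using sq_integral[of "\<lambda>v. g v - h v"] unfolding E_def G_def H_def by simp
  have Gi: "integrable P G" by (rule Pp.square_integrable_imp_integrable[OF Gm G2])
  have Hi: "integrable P H" by (rule Pp.square_integrable_imp_integrable[OF Hm H2])
  have Ei: "integrable P E" by (rule Pp.square_integrable_imp_integrable[OF Em E2])
  have GHE: "G = (\<lambda>w. H w + E w)" unfolding E_def by auto
  define TH where "TH w = real_cond_exp P (FR Rs) H w - real_cond_exp P FX H w" for w
  have a1: "AE w in P. real_cond_exp P (FR Rs) G w = real_cond_exp P (FR Rs) H w + real_cond_exp P (FR Rs) E w"
    unfolding GHE by (rule RR.real_cond_exp_add[OF Hi Ei])
  have a2: "AE w in P. real_cond_exp P FX G w = real_cond_exp P FX H w + real_cond_exp P FX E w"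
    unfolding GHE by (rule X.real_cond_exp_add[OF Hi Ei])
  have LRH: "integrable P (\<lambda>w. (real_cond_exp P (FR Rs) H w)\<^sup>2)" by (rule cond_exp_L2(1)[OF prob_P sfFR Hm H2])
  have LXH: "integrable P (\<lambda>w. (real_cond_exp P FX H w)\<^sup>2)" by (rule cond_exp_L2(1)[OF prob_P sfFX Hm H2])
  have LRE: "integrable P (\<lambda>w. (real_cond_exp P (FR Rs) E w)\<^sup>2)" by (rule cond_exp_L2(1)[OF prob_P sfFR Em E2])
  have LXE: "integrable P (\<lambda>w. (real_cond_exp P FX E w)\<^sup>2)" by (rule cond_exp_L2(1)[OF prob_P sfFX Em E2])
  have IRE: "(\<integral>w. (real_cond_exp P (FR Rs) E w)\<^sup>2 \<partial>P) \<le> (\<integral>w. (E w)\<^sup>2 \<partial>P)" by (rule cond_exp_L2(2)[OF prob_P sfFR Em E2])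
  have IXE: "(\<integral>w. (real_cond_exp P FX E w)\<^sup>2 \<partial>P) \<le> (\<integral>w. (E w)\<^sup>2 \<partial>P)" by (rule cond_exp_L2(2)[OF prob_P sfFX Em E2])
  have TH2: "integrable P (\<lambda>w. (TH w)\<^sup>2)"
  proof (rule Bochner_Integration.integrable_bound[OF Bochner_Integration.integrable_add[OF integrable_mult_right[OF LRH, of 2] integrable_mult_right[OF LXH, of 2]]])
    show "AE w in P. norm ((TH w)\<^sup>2) \<le> norm (2 * (real_cond_exp P (FR Rs) H w)\<^sup>2 + 2 * (real_cond_exp P FX H w)\<^sup>2)"
      unfolding TH_def by (intro AE_I2) (simp add: sq_diff_le)
  qed (unfold TH_def, intro borel_measurable_diff borel_measurable_power borel_measurable_cond_exp2)
  define B where "B w = 2 * (TH w)\<^sup>2 + 4 * (real_cond_exp P (FR Rs) E w)\<^sup>2 + 4 * (real_cond_exp P FX E w)\<^sup>2" for w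
  have Bi: "integrable P B" unfolding B_def[abs_def] using TH2 LRE LXE by simp
  have bnd: "AE w in P. (real_cond_exp P (FR Rs) G w - real_cond_exp P FX G w)\<^sup>2 \<le> B w"
    using a1 a2
  proof eventually_elim
    case (elim w)
    let ?rh = "real_cond_exp P (FR Rs) H w" and ?xh = "real_cond_exp P FX H w"
    let ?re = "real_cond_exp P (FR Rs) E w" and ?xe = "real_cond_exp P FX E w"
    have "(real_cond_exp P (FR Rs) G w - real_cond_exp P FX G w)\<^sup>2 = ((?rh - ?xh) + (?re - ?xe))\<^sup>2"
      using elim by (simp add: algebra_simps)
    also have "\<dots> \<le> 2 * (?rh - ?xh)\<^sup>2 + 2 * (?re - ?xe)\<^sup>2" by (rule sq_sum_le)
    also have "\<dots> \<le> 2 * (?rh - ?xh)\<^sup>2 + 2 * (2 * ?re\<^sup>2 + 2 * ?xe\<^sup>2)" using sq_diff_le[of ?re ?xe] by simp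
    finally show ?case unfolding B_def TH_def by simp
  qed
  have CI: "integrable P (\<lambda>w. (real_cond_exp P (FR Rs) G w - real_cond_exp P FX G w)\<^sup>2)"
    by (rule Bochner_Integration.integrable_bound[OF Bi])
       (use bnd in \<open>auto elim!: eventually_mono intro: borel_measurable_cond_exp2\<close>)
  have "crit Rs g P = (\<integral>w. (real_cond_exp P (FR Rs) G w - real_cond_exp P FX G w)\<^sup>2 \<partial>P)"
    unfolding crit_def G_def ..
  also have "\<dots> \<le> (\<integral>w. B w \<partial>P)" by (rule integral_mono_AE[OF CI Bi bnd])
  also have "\<dots> = 2 * (\<integral>w. (TH w)\<^sup>2 \<partial>P) + 4 * (\<integral>w. (real_cond_exp P (FR Rs) E w)\<^sup>2 \<partial>P)
                   + 4 * (\<integral>w. (real_cond_exp P FX E w)\<^sup>2 \<partial>P)"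
    unfolding B_def[abs_def] using TH2 LRE LXE by simp
  also have "\<dots> \<le> 2 * (\<integral>x. 2 * c * min (4 * c) (2 * c * \<delta> (a (snd x))) \<partial>\<Lambda>) + 4 * (\<integral>w. (E w)\<^sup>2 \<partial>P) + 4 * (\<integral>w. (E w)\<^sup>2 \<partial>P)"
  proof -
    have "(\<integral>w. (TH w)\<^sup>2 \<partial>P) \<le> (\<integral>x. 2 * c * min (4 * c) (2 * c * \<delta> (a (snd x))) \<partial>\<Lambda>)"
      unfolding TH_def H_def by (rule bounded_main[OF R a am \<delta>m \<delta>0 gb hm hc]) auto
    then show ?thesis using IRE IXE by linarith
  qed
  finally show ?thesis unfolding E2v by simp
qed

end


context sdg
begin

lemma sq_int:
  fixes f :: "real^'p \<Rightarrow> real"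
  assumes [measurable]: "f \<in> borel_measurable borel"
  shows "integrable P (\<lambda>w. (f (obsV w))\<^sup>2) \<longleftrightarrow> integrable \<Lambda> (\<lambda>x. (f (snd x))\<^sup>2)"
proof -
  have "integrable P (\<lambda>w. (f (obsV w))\<^sup>2) \<longleftrightarrow> integrable (\<Lambda> \<Otimes>\<^sub>M N) (\<lambda>x. (f (obsV (T x)))\<^sup>2)"
    by (rule integrable_P) measurable
  also have "\<dots> \<longleftrightarrow> integrable (\<Lambda> \<Otimes>\<^sub>M N) (\<lambda>x. (\<lambda>y. (f (snd y))\<^sup>2) (fst x))"
    by (simp add: obsV_T')
  also have "\<dots> \<longleftrightarrow> integrable \<Lambda> (\<lambda>x. (f (snd x))\<^sup>2)"
  proof (rule integrable_fstonly)
    have s: "(snd :: real \<times> (real^'p) \<Rightarrow> real^'p) \<in> borel_measurable borel" by (rule snd_borel)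
    show "(\<lambda>y::real \<times> (real^'p). (f (snd y))\<^sup>2) \<in> borel_measurable borel"
      using measurable_compose[OF s, of "\<lambda>v. (f v)\<^sup>2"] by simp
  qed
  finally show ?thesis .
qed

lemma obsU_T': "obsU (T x) = fst (fst x)"
  by (cases x) (auto simp: Tmap_def obsU_def split: prod.splits)

lemma gamma_L2:
  fixes \<gamma>0 :: "real^'p \<Rightarrow> real"
  assumes L2: "integrable \<Lambda> (\<lambda>w. (norm w)\<^sup>2)" and \<gamma>m[measurable]: "\<gamma>0 \<in> borel_measurable borel"
    and \<gamma>: "AE w in P. \<gamma>0 (obsV w) = real_cond_exp P (vimage_algebra (space P) obsV borel) obsU w"
  shows "integrable \<Lambda> (\<lambda>x. (\<gamma>0 (snd x))\<^sup>2)"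
proof -
  interpret Pp: prob_space P by (rule prob_P)
  have obsV_P: "obsV \<in> borel_measurable P" by (subst measurable_cong_sets[OF sets_P refl]) simp
  have obsU_P[measurable]: "obsU \<in> borel_measurable P" by (subst measurable_cong_sets[OF sets_P refl]) simp
  have sub: "subalgebra P (vimage_algebra (space P) obsV borel)"
    using sets_image_in_sets[OF refl obsV_P] unfolding subalgebra_def by simp
  interpret FV: finite_measure_subalgebra P "vimage_algebra (space P) obsV borel"
    by unfold_locales (rule sub)
  have sf: "sigma_finite_subalgebra P (vimage_algebra (space P) obsV borel)" ..
  have fst_m: "(\<lambda>y::real \<times> (real^'p). (fst y)\<^sup>2) \<in> borel_measurable borel"
    by (intro borel_measurable_continuous_onI continuous_intros)
  have "integrable \<Lambda> (\<lambda>y. (fst y)\<^sup>2)"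
  proof (rule Bochner_Integration.integrable_bound[OF L2])
    show "AE x in \<Lambda>. norm ((fst x)\<^sup>2) \<le> norm ((norm x)\<^sup>2)"
    proof (intro AE_I2)
      fix x :: "real \<times> (real^'p)"
      have "norm (fst x) \<le> norm x" by (metis norm_fst_le prod.collapse)
      then have "(norm (fst x))\<^sup>2 \<le> (norm x)\<^sup>2" by (intro power_mono) auto
      then show "norm ((fst x)\<^sup>2) \<le> norm ((norm x)\<^sup>2)" by simp
    qed
  qed (use meas_\<Lambda>[OF fst_m] in simp)
  then have "integrable (\<Lambda> \<Otimes>\<^sub>M N) (\<lambda>x. (\<lambda>y. (fst y)\<^sup>2) (fst x))"
    by (subst integrable_fstonly[OF fst_m])
  then have "integrable (\<Lambda> \<Otimes>\<^sub>M N) (\<lambda>x. (obsU (T x))\<^sup>2)" by (simp add: obsU_T')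
  then have U2: "integrable P (\<lambda>w. (obsU w)\<^sup>2)" by (subst integrable_P) auto
  have "integrable P (\<lambda>w. (real_cond_exp P (vimage_algebra (space P) obsV borel) obsU w)\<^sup>2)"
    by (rule cond_exp_L2(1)[OF prob_P sf obsU_P U2])
  then have "integrable P (\<lambda>w. (\<gamma>0 (obsV w))\<^sup>2)"
    by (rule integrable_cong_AE_imp) (use \<gamma> in \<open>auto intro: meas_P\<close>)
  then show ?thesis by (subst sq_int[symmetric]) auto
qed

end

lemma trunc_limit:
  fixes g :: "real^'p::finite \<Rightarrow> real" and \<Lambda> :: "(real \<times> (real^'p)) measure"
  assumes gm: "(\<lambda>x. g (snd x)) \<in> borel_measurable \<Lambda>" and g2: "integrable \<Lambda> (\<lambda>x. (g (snd x))\<^sup>2)"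
  shows "(\<lambda>n. \<integral>x. (g (snd x) - max (- real n) (min (real n) (g (snd x))))\<^sup>2 \<partial>\<Lambda>) \<longlonglongrightarrow> (\<integral>x. 0 \<partial>\<Lambda>)"
proof (rule integral_dominated_convergence[OF _ _ g2])
  show "AE x in \<Lambda>. (\<lambda>n. (g (snd x) - max (- real n) (min (real n) (g (snd x))))\<^sup>2) \<longlonglongrightarrow> 0"
  proof (intro AE_I2 tendsto_eventually)
    fix x :: "real \<times> (real^'p)"
    show "\<forall>\<^sub>F n in sequentially. (g (snd x) - max (- real n) (min (real n) (g (snd x))))\<^sup>2 = 0"
      unfolding eventually_sequentially
    proof (intro exI allI impI)
      fix n assume "nat \<lceil>\<bar>g (snd x)\<bar>\<rceil> \<le> n"
      then have "\<bar>g (snd x)\<bar> \<le> real n" by linarith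
      then show "(g (snd x) - max (- real n) (min (real n) (g (snd x))))\<^sup>2 = 0" by auto
    qed
  qed
  fix n
  show "AE x in \<Lambda>. norm ((g (snd x) - max (- real n) (min (real n) (g (snd x))))\<^sup>2) \<le> (g (snd x))\<^sup>2"
  proof (intro AE_I2)
    fix x :: "real \<times> (real^'p)"
    have "\<bar>g (snd x) - max (- real n) (min (real n) (g (snd x)))\<bar> \<le> \<bar>g (snd x)\<bar>" by auto
    then have "(g (snd x) - max (- real n) (min (real n) (g (snd x))))\<^sup>2 \<le> (g (snd x))\<^sup>2"
      by (metis abs_le_square_iff)
    then show "norm ((g (snd x) - max (- real n) (min (real n) (g (snd x))))\<^sup>2) \<le> (g (snd x))\<^sup>2" by simp
  qed
qed (use gm in auto)

lemma gauss_limit: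
  fixes \<Lambda> :: "(real \<times> (real^'p::finite)) measure" and a :: "real^'p \<Rightarrow> real^'r::finite"
  assumes P: "prob_space \<Lambda>" and am: "(\<lambda>x. a (snd x)) \<in> borel_measurable \<Lambda>" and c0: "c \<ge> 0"
  shows "(\<lambda>n. \<integral>x. 2 * c * min (4 * c) (2 * c * sqrt (exp ((\<Sum>i\<in>UNIV. (a (snd x) $ i)\<^sup>2) / (real (Suc n))\<^sup>2) - 1)) \<partial>\<Lambda>)
          \<longlonglongrightarrow> (\<integral>x. 0 \<partial>\<Lambda>)"
proof -
  interpret prob_space \<Lambda> by fact
  show ?thesis
  proof (rule integral_dominated_convergence[where w="\<lambda>_. 2 * c * (4 * c)"])
    show "AE x in \<Lambda>. (\<lambda>n. 2 * c * min (4 * c) (2 * c * sqrt (exp ((\<Sum>i\<in>UNIV. (a (snd x) $ i)\<^sup>2) / (real (Suc n))\<^sup>2) - 1))) \<longlonglongrightarrow> 0"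
    proof (intro AE_I2)
      fix x :: "real \<times> (real^'p)"
      define S where "S = (\<Sum>i\<in>UNIV. (a (snd x) $ i)\<^sup>2)"
      have "(\<lambda>n. S * (inverse (real (Suc n)))\<^sup>2) \<longlonglongrightarrow> S * 0\<^sup>2"
        by (intro tendsto_intros LIMSEQ_inverse_real_of_nat)
      then have l1: "(\<lambda>n. S / (real (Suc n))\<^sup>2) \<longlonglongrightarrow> 0" by (simp add: field_simps power_inverse)
      have "(\<lambda>n. 2 * c * min (4 * c) (2 * c * sqrt (exp (S / (real (Suc n))\<^sup>2) - 1))) \<longlonglongrightarrow>
              2 * c * min (4 * c) (2 * c * sqrt (exp 0 - 1))"
        by (intro tendsto_intros l1)
      then show "(\<lambda>n. 2 * c * min (4 * c) (2 * c * sqrt (exp ((\<Sum>i\<in>UNIV. (a (snd x) $ i)\<^sup>2) / (real (Suc n))\<^sup>2) - 1))) \<longlonglongrightarrow> 0"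
        using c0 by (simp add: S_def)
    qed
    fix n
    show "AE x in \<Lambda>. norm (2 * c * min (4 * c) (2 * c * sqrt (exp ((\<Sum>i\<in>UNIV. (a (snd x) $ i)\<^sup>2) / (real (Suc n))\<^sup>2) - 1))) \<le> 2 * c * (4 * c)"
    proof (intro AE_I2)
      fix x :: "real \<times> (real^'p)"
      define t where "t = 2 * c * sqrt (exp ((\<Sum>i\<in>UNIV. (a (snd x) $ i)\<^sup>2) / (real (Suc n))\<^sup>2) - 1)"
      have "0 \<le> (\<Sum>i\<in>UNIV. (a (snd x) $ i)\<^sup>2) / (real (Suc n))\<^sup>2" by (intro divide_nonneg_nonneg sum_nonneg) auto
      then have "1 \<le> exp ((\<Sum>i\<in>UNIV. (a (snd x) $ i)\<^sup>2) / (real (Suc n))\<^sup>2)" by simp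
      then have t0: "0 \<le> t" unfolding t_def using c0 by simp
      then have m: "\<bar>min (4 * c) t\<bar> \<le> 4 * c" using c0 by auto
      show "norm (2 * c * min (4 * c) (2 * c * sqrt (exp ((\<Sum>i\<in>UNIV. (a (snd x) $ i)\<^sup>2) / (real (Suc n))\<^sup>2) - 1))) \<le> 2 * c * (4 * c)"
        unfolding t_def[symmetric] real_norm_def abs_mult using mult_left_mono[OF m, of "2*c"] c0 by simp
    qed
  next
    fix n
    have Fm: "(\<lambda>b::real^'r. 2 * c * min (4 * c) (2 * c * sqrt (exp ((\<Sum>i\<in>UNIV. (b $ i)\<^sup>2) / (real (Suc n))\<^sup>2) - 1)))
      \<in> borel_measurable borel" by measurable
    show "(\<lambda>x. 2 * c * min (4 * c) (2 * c * sqrt (exp ((\<Sum>i\<in>UNIV. (a (snd x) $ i)\<^sup>2) / (real (Suc n))\<^sup>2) - 1)))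
      \<in> borel_measurable \<Lambda>" using measurable_compose[OF am Fm] by simp
  qed auto
qed

theorem proposition5:
  fixes f0 :: "real^'p::finite \<Rightarrow> real"
    and M0 :: "real^'r::finite^'p"
    and \<Lambda>0 :: "(real \<times> (real^'p)) measure"
    and Q0 :: "(real^'r) measure set"
    and Qtr :: "(real^'r) measure"
    and Rs :: "(real^'p) list"
    and \<gamma>0 :: "real^'p \<Rightarrow> real"
  assumes simdg: "simdg f0 M0 \<Lambda>0 Q0"
    and bdd_f0: "\<exists>C. \<forall>P\<in>induced_set f0 M0 \<Lambda>0 Q0.
                   integrable P (\<lambda>w. (f0 (obsX w))\<^sup>2) \<and> (\<integral>w. (f0 (obsX w))\<^sup>2 \<partial>P) \<le> C"
    and Qtr: "Qtr \<in> Q0"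
    and Qtr_mean: "integrable Qtr (\<lambda>z. z) \<and> (\<integral>z. z \<partial>Qtr) = 0"
    and Qtr_cov: "(\<forall>i j. integrable Qtr (\<lambda>z. z $ i * z $ j)) \<and>
                  (\<forall>a::real^'r. a \<noteq> 0 \<longrightarrow> (\<integral>z. (a \<bullet> z)\<^sup>2 \<partial>Qtr) > 0)"
    and R: "is_R M0 Rs"
    and \<gamma>0_meas: "\<gamma>0 \<in> borel_measurable borel"
    and \<gamma>0: "AE w in induced_dist f0 M0 \<Lambda>0 Qtr.
               \<gamma>0 (obsV w) = real_cond_exp (induced_dist f0 M0 \<Lambda>0 Qtr)
                  (vimage_algebra (space (induced_dist f0 M0 \<Lambda>0 Qtr)) obsV borel) obsU w"
    and gauss: "\<forall>k::nat. k \<ge> 1 \<longrightarrow> gauss_iso (real k) \<in> Q0"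
    and cases: "(absolutely_continuous lborel (distr \<Lambda>0 borel snd) \<and>
                 (\<exists>B. AE w in \<Lambda>0. \<bar>\<gamma>0 (snd w)\<bar> \<le> B))
                \<or> centered_nondeg_gaussian \<Lambda>0"
  shows "(INF P\<in>induced_set f0 M0 \<Lambda>0 Q0. crit Rs \<gamma>0 P) = 0"
proof -
  note sd = simdg[unfolded simdg_def]
  have f0m[measurable]: "f0 \<in> borel_measurable borel" using sd by (simp only:)
  have \<Lambda>p: "prob_space \<Lambda>0" using sd by (simp only:)
  have \<Lambda>s: "sets \<Lambda>0 = sets borel" using sd by (simp only:)
  have L2: "integrable \<Lambda>0 (\<lambda>w. (norm w)\<^sup>2)" using sd by (simp only:)
  have Qall: "\<forall>Q\<in>Q0. prob_space Q \<and> sets Q = sets borel" using sd by (elim conjE) assumption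
  have Qs: "prob_space Q \<and> sets Q = sets borel" if "Q \<in> Q0" for Q using Qall that by (rule bspec)
  have sdgQ: "sdg f0 \<Lambda>0 Q" if "Q \<in> Q0" for Q
    using Qs[OF that] f0m \<Lambda>p \<Lambda>s unfolding sdg_def by (elim conjE) (intro conjI; assumption)
  interpret tr: sdg f0 M0 \<Lambda>0 Qtr by (rule sdgQ[OF Qtr])
  have g2: "integrable \<Lambda>0 (\<lambda>x. (\<gamma>0 (snd x))\<^sup>2)" by (rule tr.gamma_L2[OF L2 \<gamma>0_meas \<gamma>0])
  have \<gamma>m[measurable]: "\<gamma>0 \<in> borel_measurable borel" by (rule \<gamma>0_meas)
  obtain A where Al: "linear A" and Ainv: "\<forall>u\<in>range ((*v) M0). M0 *v A u = u"
    using real_vector.linear_exists_right_inverse_on[OF matrix_vector_mul_linear subspace_UNIV, of M0] by blast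
  define a where "a v = A (v - PR Rs v)" for v
  have ha: "M0 *v a v = v - PR Rs v" for v unfolding a_def using Ainv PR_range[OF R] by blast
  have Ac: "continuous_on UNIV A" using Al by (simp add: linear_continuous_on linear_conv_bounded_linear)
  have PRc: "continuous_on UNIV (PR Rs)" unfolding PR_def[abs_def] by (intro continuous_intros)
  have am[measurable]: "a \<in> borel_measurable borel" unfolding a_def[abs_def]
    by (intro borel_measurable_continuous_onI continuous_on_compose2[OF Ac] continuous_intros PRc) auto
  have \<Lambda>s2: "sets \<Lambda>0 = sets (borel \<Otimes>\<^sub>M borel)" unfolding borel_prod by (rule \<Lambda>s)
  have am\<Lambda>: "(\<lambda>x. a (snd x)) \<in> borel_measurable \<Lambda>0"
    by (subst measurable_cong_sets[OF \<Lambda>s2 refl]) measurable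
  have gm\<Lambda>: "(\<lambda>x. \<gamma>0 (snd x)) \<in> borel_measurable \<Lambda>0"
    by (subst measurable_cong_sets[OF \<Lambda>s2 refl]) measurable
  have key: "crit Rs \<gamma>0 (induced_dist f0 M0 \<Lambda>0 (gauss_iso (real (Suc k))))
     \<le> 2 * (\<integral>x. 2 * real n * min (4 * real n) (2 * real n * sqrt (exp ((\<Sum>i\<in>UNIV. (a (snd x) $ i)\<^sup>2) / (real (Suc k))\<^sup>2) - 1)) \<partial>\<Lambda>0)
       + 8 * (\<integral>x. (\<gamma>0 (snd x) - max (- real n) (min (real n) (\<gamma>0 (snd x))))\<^sup>2 \<partial>\<Lambda>0)" for k n
  proof -
    have GQ: "gauss_iso (real (Suc k)) \<in> Q0" using gauss by auto
    interpret G: sdg f0 M0 \<Lambda>0 "gauss_iso (real (Suc k))" by (rule sdgQ[OF GQ])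
    define \<delta> where "\<delta> b = sqrt (exp ((\<Sum>i\<in>UNIV. (b $ i)\<^sup>2) / (real (Suc k))\<^sup>2) - 1)" for b :: "real^'r"
    have \<delta>m: "\<delta> \<in> borel_measurable borel" unfolding \<delta>_def[abs_def] by measurable
    have \<delta>0: "\<delta> b \<ge> 0" for b
    proof -
      have "0 \<le> (\<Sum>i\<in>UNIV. (b $ i)\<^sup>2) / (real (Suc k))\<^sup>2" by (intro divide_nonneg_nonneg sum_nonneg) auto
      then show ?thesis unfolding \<delta>_def by simp
    qed
    have gb: "\<bar>(\<integral>z. \<phi> (z + b) \<partial>gauss_iso (real (Suc k))) - (\<integral>z. \<phi> z \<partial>gauss_iso (real (Suc k)))\<bar> \<le> B * \<delta> b"
      if "\<phi> \<in> borel_measurable borel" "\<And>z. \<bar>\<phi> z\<bar> \<le> B" for \<phi> B b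
      unfolding \<delta>_def by (rule gauss_shift[OF _ _ that]) (use Qs[OF GQ] in auto)
    have hm: "(\<lambda>v. max (- real n) (min (real n) (\<gamma>0 v))) \<in> borel_measurable borel" by measurable
    have hc: "\<bar>max (- real n) (min (real n) (\<gamma>0 v))\<bar> \<le> real n" for v by auto
    show ?thesis
      using G.general_bound[OF R ha am \<delta>m \<delta>0 gb hm hc \<gamma>m g2] unfolding \<delta>_def by simp
  qed
  let ?S = "induced_set f0 M0 \<Lambda>0 Q0"
  have nonneg: "0 \<le> crit Rs \<gamma>0 P" for P :: "('p,'r) outcome measure" unfolding crit_def by (rule integral_nonneg_AE) auto
  have ne: "?S \<noteq> {}" using Qtr unfolding induced_set_def by auto
  have bdd: "bdd_below (crit Rs \<gamma>0 ` ?S)" by (rule bdd_belowI[where m=0]) (use nonneg in blast)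
  have lower: "0 \<le> (INF P\<in>?S. crit Rs \<gamma>0 P)" by (rule cINF_greatest[OF ne nonneg])
  have upper: "(INF P\<in>?S. crit Rs \<gamma>0 P) \<le> e" if e: "e > 0" for e
  proof -
    from trunc_limit[OF gm\<Lambda> g2] have "(\<lambda>n. \<integral>x. (\<gamma>0 (snd x) - max (- real n) (min (real n) (\<gamma>0 (snd x))))\<^sup>2 \<partial>\<Lambda>0) \<longlonglongrightarrow> 0"
      by simp
    from order_tendstoD(2)[OF this, of "e / 16"] e obtain n where
      n: "(\<integral>x. (\<gamma>0 (snd x) - max (- real n) (min (real n) (\<gamma>0 (snd x))))\<^sup>2 \<partial>\<Lambda>0) < e / 16"
      by (auto simp: eventually_sequentially)
    from gauss_limit[OF \<Lambda>p am\<Lambda>, of "real n"] have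
      "(\<lambda>k. \<integral>x. 2 * real n * min (4 * real n) (2 * real n * sqrt (exp ((\<Sum>i\<in>UNIV. (a (snd x) $ i)\<^sup>2) / (real (Suc k))\<^sup>2) - 1)) \<partial>\<Lambda>0) \<longlonglongrightarrow> 0"
      by simp
    from order_tendstoD(2)[OF this, of "e / 4"] e obtain k where
      k: "(\<integral>x. 2 * real n * min (4 * real n) (2 * real n * sqrt (exp ((\<Sum>i\<in>UNIV. (a (snd x) $ i)\<^sup>2) / (real (Suc k))\<^sup>2) - 1)) \<partial>\<Lambda>0) < e / 4"
      by (auto simp: eventually_sequentially)
    have mem: "induced_dist f0 M0 \<Lambda>0 (gauss_iso (real (Suc k))) \<in> ?S"
    proof -
      have "gauss_iso (real (Suc k)) \<in> Q0" using gauss[rule_format, of "Suc k"] by simp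
      then show ?thesis unfolding induced_set_def by (rule imageI)
    qed
    have "(INF P\<in>?S. crit Rs \<gamma>0 P) \<le> crit Rs \<gamma>0 (induced_dist f0 M0 \<Lambda>0 (gauss_iso (real (Suc k))))"
      by (rule cINF_lower[OF bdd mem])
    also have "\<dots> \<le> e" using key[of k n] n k by linarith
    finally show ?thesis .
  qed
  have "(INF P\<in>?S. crit Rs \<gamma>0 P) \<le> 0"
    by (rule field_le_epsilon) (use upper in simp)
  then show ?thesis using lower by linarith
qed

end
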